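(* In the $\ell$-variant cup game, if at some time there is a cup of fill $k$ for some integer $k\ge3$, then at that time there is a cup of fill $k-1$ or a cup of fill $k-2$.
   Context: The $\ell$-variant cup game on $n$ cups ($\ell$ a positive integer): $n$ cups with integer fills, all initially $0$. In each round the player chooses an integer $k'\ge0$ and an integer $q\ge1$ such that at least $2q$ cups have fill exactly $k'$. Among these cups, exactly $q$ are raised to $k'+1$; if $k'$ is a multiple of $\ell$ the other $q$ stay at $k'$, and otherwise $q$ other such cups are lowered to $k'-1$. *)

theory Defs
  imports Main
begin

text \<open>Cups are indexed by 0..<n; a configuration assigns an integer fill to each cup
  (values at indices \<ge> n are irrelevant and stay 0).\<close>

definition cup_move :: "nat \<Rightarrow> nat \<Rightarrow> (nat \<Rightarrow> int) \<Rightarrow> (nat \<Rightarrow> int) \<Rightarrow> bool" where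
  "cup_move l n f g \<longleftrightarrow>
     (\<exists>(k::int) (q::nat) U D. k \<ge> 0 \<and> q \<ge> 1 \<and>
        U \<subseteq> {..<n} \<and> D \<subseteq> {..<n} \<and> U \<inter> D = {} \<and>
        card U = q \<and> card D = q \<and> (\<forall>i \<in> U \<union> D. f i = k) \<and>
        g = (\<lambda>i. if i \<in> U then k + 1
                  else if i \<in> D \<and> \<not> (int l dvd k) then k - 1
                  else f i))"

inductive cup_reachable :: "nat \<Rightarrow> nat \<Rightarrow> (nat \<Rightarrow> int) \<Rightarrow> bool" for l n where
  init: "cup_reachable l n (\<lambda>_. 0)"
| step: "cup_reachable l n f \<Longrightarrow> cup_move l n f g \<Longrightarrow> cup_reachable l n g"

end

theory Submission
  imports Defs
begin

definition cinv :: "nat \<Rightarrow> (nat \<Rightarrow> int) \<Rightarrow> bool" where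
  "cinv n f \<longleftrightarrow> (\<forall>i<n. f i \<ge> 3 \<longrightarrow> (\<exists>j<n. f j = f i - 1 \<or> f j = f i - 2))"

lemma move_inv:
  assumes inv: "cinv n f" and mv: "cup_move l n f g"
  shows "cinv n g"
proof -
  obtain k q U D where k: "k \<ge> 0" "q \<ge> 1" and sub: "U \<subseteq> {..<n}" "D \<subseteq> {..<n}"
    and disj: "U \<inter> D = {}" and cU: "card U = q" and cD: "card D = q"
    and fk: "\<forall>i \<in> U \<union> D. f i = k"
    and gdef: "g = (\<lambda>i. if i \<in> U then k + 1
                  else if i \<in> D \<and> \<not> (int l dvd k) then k - 1
                  else f i)"
    using mv unfolding cup_move_def by blast
  have "U \<noteq> {}" using cU k(2) by auto
  then obtain u where u: "u \<in> U" by blast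
  have "D \<noteq> {}" using cD k(2) by auto
  then obtain d where d: "d \<in> D" by blast
  have un: "u < n" "d < n" using u d sub by auto
  have gu: "g u = k + 1" using u gdef by simp
  have gd: "g d = k \<or> g d = k - 1" using d disj fk gdef by auto
  have gother: "g j = f j" if "f j \<noteq> k" for j using that fk gdef by auto
  show ?thesis unfolding cinv_def
  proof (intro allI impI)
    fix i assume i: "i < n" "3 \<le> g i"
    show "\<exists>j<n. g j = g i - 1 \<or> g j = g i - 2"
    proof (cases "i \<in> U")
      case True
      hence "g i = k + 1" using gdef by simp
      then show ?thesis using gd un by (intro exI[of _ d]) auto
    next
      case nU: False
      show ?thesis
      proof (cases "i \<in> D \<and> \<not> (int l dvd k)")
        case True
        hence gi: "g i = k - 1" "f i = k" using nU gdef fk by auto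
        then obtain j where j: "j < n" "f j = k - 1 \<or> f j = k - 2"
          using inv i unfolding cinv_def by force
        show ?thesis
        proof (cases "f j = k - 2")
          case True then show ?thesis using j gother gi by auto
        next
          case False
          hence fj: "f j = k - 1" using j by auto
          then obtain j' where j': "j' < n" "f j' = k - 2 \<or> f j' = k - 3"
            using inv j i gi unfolding cinv_def by force
          then show ?thesis using gother gi by (intro exI[of _ j']) auto
        qed
      next
        case False
        hence gi: "g i = f i" using nU gdef by auto
        then obtain j where j: "j < n" "f j = f i - 1 \<or> f j = f i - 2"
          using inv i unfolding cinv_def by force
        show ?thesis
        proof (cases "f j = k")
          case False then show ?thesis using j gother gi by auto
        next
          case True
          show ?thesis
          proof (cases "f i = k + 2")
            case True then show ?thesis using gu un gi by auto
          next
            case False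
            hence "f i = k + 1" using j \<open>f j = k\<close> by auto
            then show ?thesis using gd un gi by auto
          qed
        qed
      qed
    qed
  qed
qed

lemma reach_inv: "cup_reachable l n f \<Longrightarrow> cinv n f"
proof (induction rule: cup_reachable.induct)
  case init then show ?case unfolding cinv_def by simp
next
  case (step f g) then show ?case using move_inv by blast
qed

theorem proposition6p5:
  fixes l n :: nat and f :: "nat \<Rightarrow> int" and k :: int and i :: nat
  assumes "l \<ge> 1"
    and "cup_reachable l n f"
    and "i < n" and "f i = k" and "k \<ge> 3"
  shows "\<exists>j < n. f j = k - 1 \<or> f j = k - 2"
  using reach_inv[OF assms(2)] assms(3-5) unfolding cinv_def by blast

end
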